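(* Let $\|\cdot\|$ be a norm on $\mathbb{R}^{m\times d}$, $C$, $L_X(D)$, $C_X(D)$ as below, $X\in\mathbb{R}^{m\times n}$, and $\mathfrak{D}\subset\mathbb{R}^{m\times d}$. Suppose there are finite constants $L_X(\mathfrak{D})>0$ and $C_X(\mathfrak{D})\ge0$ with $\sup_{D\in\mathfrak{D}}L_X(D)\le L_X(\mathfrak{D})$ and $\sup_{D\in\mathfrak{D}}C_X(D)\le C_X(\mathfrak{D})$. Then for all $D\neq D'\in\mathfrak{D}$, $$\frac{|F_X(D')-F_X(D)|}{\|D'-D\|}\le L_X(\mathfrak{D})\Big(1+\frac{C_X(\mathfrak{D})}{L_X(\mathfrak{D})}\|D'-D\|\Big).$$
   Context: A penalty is a function $g:\mathbb{R}^d\to\mathbb{R}\cup\{+\infty\}$ with $g\ge0$, not identically $+\infty$. $\mathcal{L}_x(D,\alpha)=\tfrac12\|x-D\alpha\|_2^2+g(\alpha)$, $f_x(D)=\inf_\alpha\mathcal{L}_x(D,\alpha)$, $F_X(D)=\frac1n\sum_i f_{x_i}(D)$ for $X=[x_1,\dots,x_n]$. $\|\Delta\|_{1\to2}=\max_j\|\delta_j\|_2$. $\|\cdot\|_\star$ is the dual norm of $\|\cdot\|$ w.r.t. the Frobenius inner product, and $C>0$ is a constant with $\|\Delta\|_{1\to2}^2\le C\|\Delta\|^2$ for all $\Delta$. For $\epsilon>0$, $\mathfrak{A}_\epsilon(X,D)=\{A=[\alpha_1,\dots,\alpha_n]:\ \mathcal{L}_{x_i}(D,\alpha_i)\le f_{x_i}(D)+\epsilon\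 \forall i\}$; $L_X(D)=\inf_{\epsilon>0}\sup_{A\in\mathfrak{A}_\epsilon(X,D)}\frac1n\|(X-DA)A^\top\|_\star$ and $C_X(D)=\inf_{\epsilon>0}\sup_{A\in\mathfrak{A}_\epsilon(X,D)}\frac{C}{2n}\sum_i\|\alpha_i\|_1^2$. *)

theory Defs
  imports "HOL-Analysis.Analysis" "HOL-Library.Extended_Real"
begin

text \<open>Matrices are rendered with type-indexed dimensions:
  D :: real^'d^'m (m x d), X :: real^'n^'m (m x n), codes A :: real^'n^'d (d x n).
  Columns are 'column i M'.\<close>

definition is_penalty :: "(real^'d \<Rightarrow> ereal) \<Rightarrow> bool" where
  "is_penalty g \<longleftrightarrow> (\<forall>a. 0 \<le> g a) \<and> (\<exists>a. g a \<noteq> \<infinity>)"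

definition is_norm_on :: "('a::real_vector \<Rightarrow> real) \<Rightarrow> bool" where
  "is_norm_on N \<longleftrightarrow> (\<forall>x. N x = 0 \<longleftrightarrow> x = 0) \<and> (\<forall>c x. N (c *\<^sub>R x) = \<bar>c\<bar> * N x)
     \<and> (\<forall>x y. N (x + y) \<le> N x + N y)"

definition frob_inner :: "real^'d^'m \<Rightarrow> real^'d^'m \<Rightarrow> real" where
  "frob_inner M P = (\<Sum>i\<in>UNIV. \<Sum>j\<in>UNIV. M $ i $ j * P $ i $ j)"

definition dual_norm :: "(real^'d^'m \<Rightarrow> real) \<Rightarrow> real^'d^'m \<Rightarrow> real" where
  "dual_norm N M = Sup {frob_inner M P | P. N P \<le> 1}"

definition norm_1to2 :: "real^'d^'m \<Rightarrow> real" where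
  "norm_1to2 P = Max {norm (column j P) | j. True}"

definition norm_l1 :: "real^'d \<Rightarrow> real" where
  "norm_l1 a = (\<Sum>j\<in>UNIV. \<bar>a $ j\<bar>)"

definition lossL :: "(real^'d \<Rightarrow> ereal) \<Rightarrow> real^'m \<Rightarrow> real^'d^'m \<Rightarrow> real^'d \<Rightarrow> ereal" where
  "lossL g x D a = ereal (1/2 * (norm (x - D *v a))\<^sup>2) + g a"

definition fx :: "(real^'d \<Rightarrow> ereal) \<Rightarrow> real^'m \<Rightarrow> real^'d^'m \<Rightarrow> ereal" where
  "fx g x D = (INF a. lossL g x D a)"

text \<open>F_X(D); each f_x(D) is finite for a penalty g, so we average the real values.\<close>
definition FX :: "(real^'d \<Rightarrow> ereal) \<Rightarrow> real^'n^'m \<Rightarrow> real^'d^'m \<Rightarrow> real" where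
  "FX g X D = (1 / real CARD('n)) * (\<Sum>i\<in>UNIV. real_of_ereal (fx g (column i X) D))"

definition approx_codes :: "(real^'d \<Rightarrow> ereal) \<Rightarrow> real \<Rightarrow> real^'n^'m \<Rightarrow> real^'d^'m \<Rightarrow> (real^'n^'d) set" where
  "approx_codes g \<epsilon> X D = {A. \<forall>i. lossL g (column i X) D (column i A) \<le> fx g (column i X) D + ereal \<epsilon>}"

definition LX :: "(real^'d \<Rightarrow> ereal) \<Rightarrow> (real^'d^'m \<Rightarrow> real) \<Rightarrow> real^'n^'m \<Rightarrow> real^'d^'m \<Rightarrow> ereal" where
  "LX g N X D = (INF \<epsilon>\<in>{0<..}. SUP A\<in>approx_codes g \<epsilon> X D.
      ereal (1 / real CARD('n) * dual_norm N ((X - D ** A) ** transpose A)))"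

definition CX :: "(real^'d \<Rightarrow> ereal) \<Rightarrow> real \<Rightarrow> real^'n^'m \<Rightarrow> real^'d^'m \<Rightarrow> ereal" where
  "CX g C X D = (INF \<epsilon>\<in>{0<..}. SUP A\<in>approx_codes g \<epsilon> X D.
      ereal (C / (2 * real CARD('n)) * (\<Sum>i\<in>UNIV. (norm_l1 (column i A))\<^sup>2)))"

end

theory Submission
  imports Defs
begin


lemma mv_diff: "(D' - D) *v (a::real^'d) = D' *v a - (D::real^'d^'m) *v a"
  by (simp add: matrix_vector_mult_def vec_eq_iff sum_subtractf left_diff_distrib)

lemma key_id:
  fixes x :: "real^'m" and D D' :: "real^'d^'m" and a :: "real^'d"
  shows "1/2 * (norm (x - D' *v a))\<^sup>2 = 1/2 * (norm (x - D *v a))\<^sup>2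
     - inner (x - D *v a) ((D' - D) *v a) + 1/2 * (norm ((D' - D) *v a))\<^sup>2"
proof -
  have e: "x - D' *v a = (x - D *v a) - (D' - D) *v a" by (simp add: mv_diff)
  show ?thesis unfolding e power2_norm_eq_inner
    by (simp add: inner_diff_left inner_diff_right inner_commute algebra_simps)
qed

lemma col_bound:
  fixes P :: "real^'d^'m" and a :: "real^'d"
  shows "norm (P *v a) \<le> norm_1to2 P * norm_l1 a"
proof -
  have fin: "finite {norm (column j P) | j. True}"
    by (simp add: full_SetCompr_eq)
  have cb: "norm (column j P) \<le> norm_1to2 P" for j
    unfolding norm_1to2_def by (rule Max_ge[OF fin]) blast
  have "norm (P *v a) = norm (\<Sum>j\<in>UNIV. a$j *\<^sub>R column j P)"
    by (simp add: matrix_mult_sum scalar_mult_eq_scaleR)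
  also have "\<dots> \<le> (\<Sum>j\<in>UNIV. norm (a$j *\<^sub>R column j P))" by (rule norm_sum)
  also have "\<dots> = (\<Sum>j\<in>UNIV. \<bar>a$j\<bar> * norm (column j P))" by simp
  also have "\<dots> \<le> (\<Sum>j\<in>UNIV. \<bar>a$j\<bar> * norm_1to2 P)"
    by (rule sum_mono) (simp add: cb mult_left_mono)
  also have "\<dots> = norm_1to2 P * norm_l1 a"
    by (simp add: norm_l1_def sum_distrib_left sum_distrib_right mult.commute)
  finally show ?thesis .
qed

lemma sum_id:
  fixes X :: "real^'n^'m" and D \<Delta> :: "real^'d^'m" and A :: "real^'n^'d"
  shows "(\<Sum>i\<in>UNIV. inner (column i X - D *v column i A) (\<Delta> *v column i A))
     = frob_inner ((X - D ** A) ** transpose A) \<Delta>"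
proof -
  have c: "column i X - D *v column i A = column i (X - D ** A)" for i
    by (simp add: column_def matrix_vector_mult_def matrix_matrix_mult_def vec_eq_iff)
  show ?thesis unfolding c
    apply (simp add: inner_vec_def frob_inner_def matrix_vector_mult_def matrix_matrix_mult_def
       transpose_def column_def sum_distrib_left sum_distrib_right)
    apply (subst (2) sum.swap)
    apply (subst sum.swap)
    apply (rule sum.cong, simp)
    apply (subst sum.swap)
    apply (simp add: algebra_simps)
    apply (rule sum.swap)
    done
qed

lemma N_zero: "is_norm_on N \<Longrightarrow> N 0 = 0"
  unfolding is_norm_on_def by blast

lemma N_neg: "is_norm_on N \<Longrightarrow> N (- x) = N x"
proof -
  assume n: "is_norm_on N"
  have "N ((-1) *\<^sub>R x) = \<bar>-1\<bar> * N x" using n unfolding is_norm_on_def by blast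
  then show ?thesis by simp
qed

lemma N_nonneg: "is_norm_on N \<Longrightarrow> 0 \<le> N x"
proof -
  assume n: "is_norm_on N"
  have "N (x + - x) \<le> N x + N (- x)" using n unfolding is_norm_on_def by blast
  then show ?thesis using N_zero[OF n] N_neg[OF n, of x] by simp
qed

lemma n1to2_nonneg: "0 \<le> norm_1to2 (P::real^'d^'m)"
proof -
  have fin: "finite {norm (column j P) | j. True}"
    by (simp add: full_SetCompr_eq)
  obtain j :: 'd where True by simp
  have "norm (column j P) \<le> norm_1to2 P"
    unfolding norm_1to2_def by (rule Max_ge[OF fin]) blast
  then show ?thesis using norm_ge_zero order_trans by blast
qed

lemma frob_le_1to2:
  fixes M P :: "real^'d^'m"
  shows "frob_inner M P \<le> (\<Sum>i\<in>UNIV. \<Sum>j\<in>UNIV. \<bar>M $ i $ j\<bar>) * norm_1to2 P"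
proof -
  have fin: "finite {norm (column j P) | j. True}"
    by (simp add: full_SetCompr_eq)
  have cb: "\<bar>P $ i $ j\<bar> \<le> norm_1to2 P" for i j
  proof -
    have "\<bar>P $ i $ j\<bar> = \<bar>column j P $ i\<bar>" by (simp add: column_def)
    also have "\<dots> \<le> norm (column j P)" by (rule component_le_norm_cart)
    also have "\<dots> \<le> norm_1to2 P" unfolding norm_1to2_def by (rule Max_ge[OF fin]) blast
    finally show ?thesis .
  qed
  have "frob_inner M P \<le> (\<Sum>i\<in>UNIV. \<Sum>j\<in>UNIV. \<bar>M $ i $ j\<bar> * norm_1to2 P)"
    unfolding frob_inner_def
    apply (rule sum_mono)+
    by (rule order_trans[OF abs_ge_self]) (simp add: abs_mult mult_left_mono cb)
  also have "\<dots> = (\<Sum>i\<in>UNIV. \<Sum>j\<in>UNIV. \<bar>M $ i $ j\<bar>) * norm_1to2 P"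
    by (simp add: sum_distrib_right)
  finally show ?thesis .
qed

lemma dual_bound:
  fixes N :: "real^'d^'m \<Rightarrow> real"
  assumes n: "is_norm_on N" and C: "C > 0" and h: "\<forall>P. (norm_1to2 P)\<^sup>2 \<le> C * (N P)\<^sup>2"
  shows "frob_inner M P \<le> dual_norm N M * N P"
proof -
  let ?K = "(\<Sum>i\<in>UNIV. \<Sum>j\<in>UNIV. \<bar>M $ i $ j\<bar>)"
  have Kn: "0 \<le> ?K" by (simp add: sum_nonneg)
  have b12: "norm_1to2 Q \<le> sqrt C * N Q" for Q
  proof -
    have "(norm_1to2 Q)\<^sup>2 \<le> (sqrt C * N Q)\<^sup>2" using h C by (simp add: power_mult_distrib)
    moreover have "0 \<le> sqrt C * N Q" using N_nonneg[OF n, of Q] C by simp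
    ultimately show ?thesis by (rule power2_le_imp_le)
  qed
  have bdd: "bdd_above {frob_inner M Q | Q. N Q \<le> 1}"
  proof (rule bdd_aboveI[where M="?K * sqrt C"])
    fix x assume "x \<in> {frob_inner M Q | Q. N Q \<le> 1}"
    then obtain Q where x: "x = frob_inner M Q" and q: "N Q \<le> 1" by blast
    have "x \<le> ?K * norm_1to2 Q" using x frob_le_1to2 by simp
    also have "\<dots> \<le> ?K * (sqrt C * N Q)" using b12 Kn mult_left_mono by blast
    also have "\<dots> \<le> ?K * sqrt C"
      using q Kn C by (simp add: mult_left_mono)
    finally show "x \<le> ?K * sqrt C" .
  qed
  show ?thesis
  proof (cases "N P = 0")
    case True
    then have "P = 0" using n unfolding is_norm_on_def by blast
    then show ?thesis using N_zero[OF n] by (simp add: frob_inner_def)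
  next
    case False
    then have pos: "N P > 0" using N_nonneg[OF n, of P] by simp
    let ?Q = "(1 / N P) *\<^sub>R P"
    have "N ?Q = \<bar>1 / N P\<bar> * N P" using n unfolding is_norm_on_def by blast
    then have "N ?Q = 1" using pos by simp
    then have "frob_inner M ?Q \<le> dual_norm N M"
      unfolding dual_norm_def by (intro cSup_upper bdd) auto
    moreover have "frob_inner M ?Q = frob_inner M P / N P"
      by (simp add: frob_inner_def sum_divide_distrib)
    ultimately show ?thesis using pos by (simp add: pos_divide_le_eq)
  qed
qed

lemma fx_bounds:
  assumes "is_penalty g"
  shows "0 \<le> fx g x D" "fx g x D < \<infinity>"
proof -
  show "0 \<le> fx g x D" unfolding fx_def lossL_def using assms unfolding is_penalty_def
    by (intro INF_greatest) simp
  obtain a where a: "g a \<noteq> \<infinity>" using assms unfolding is_penalty_def by blast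
  have "fx g x D \<le> lossL g x D a" unfolding fx_def by (rule INF_lower) simp
  also have "\<dots> < \<infinity>" unfolding lossL_def using a by simp
  finally show "fx g x D < \<infinity>" .
qed

lemma near_min:
  assumes "is_penalty g" "e > 0"
  shows "\<exists>a. lossL g x D a \<le> fx g x D + ereal e"
proof -
  obtain r where r: "fx g x D = ereal r" using fx_bounds[OF assms(1), of x D]
    by (cases "fx g x D") auto
  have "fx g x D < fx g x D + ereal e" using r assms(2) by simp
  then have "(INF a. lossL g x D a) < fx g x D + ereal e" by (simp add: fx_def)
  then obtain a where "lossL g x D a < fx g x D + ereal e"
    by (auto simp only: INF_less_iff)
  then show ?thesis by (auto intro: less_imp_le)
qed

lemma col_step:
  assumes pg: "is_penalty g" and h: "lossL g x D a \<le> fx g x D + ereal e"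
  shows "real_of_ereal (fx g x D') - real_of_ereal (fx g x D)
     \<le> e - inner (x - D *v a) ((D' - D) *v a) + 1/2 * (norm ((D' - D) *v a))\<^sup>2"
proof -
  obtain r where r: "fx g x D = ereal r" using fx_bounds[OF pg, of x D]
    by (cases "fx g x D") auto
  obtain r' where r': "fx g x D' = ereal r'" using fx_bounds[OF pg, of x D']
    by (cases "fx g x D'") auto
  have g0: "0 \<le> g a" using pg unfolding is_penalty_def by blast
  have "g a \<noteq> \<infinity>" using h r unfolding lossL_def by auto
  then obtain ga where ga: "g a = ereal ga" using g0 by (cases "g a") auto
  have 1: "1/2 * (norm (x - D *v a))\<^sup>2 + ga \<le> r + e" using h r ga unfolding lossL_def by simp
  have "fx g x D' \<le> lossL g x D' a" unfolding fx_def by (rule INF_lower) simp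
  then have 2: "r' \<le> 1/2 * (norm (x - D' *v a))\<^sup>2 + ga" using r' ga unfolding lossL_def by simp
  have "r' - r \<le> e - inner (x - D *v a) ((D' - D) *v a) + 1/2 * (norm ((D' - D) *v a))\<^sup>2"
    using 1 2 key_id[of x D' a D] by linarith
  then show ?thesis using r r' by simp
qed

lemma core:
  fixes g :: "real^'d \<Rightarrow> ereal" and N :: "real^'d^'m \<Rightarrow> real" and X :: "real^'n^'m"
  assumes pg: "is_penalty g" and n: "is_norm_on N" and C: "C > 0"
    and h: "\<forall>P. (norm_1to2 P)\<^sup>2 \<le> C * (N P)\<^sup>2"
    and A: "A \<in> approx_codes g e X D"
  shows "FX g X D' - FX g X D \<le> e + N (D' - D) * (1 / real CARD('n) * dual_norm N ((X - D ** A) ** transpose A))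
     + (N (D' - D))\<^sup>2 * (C / (2 * real CARD('n)) * (\<Sum>i\<in>UNIV. (norm_l1 (column i A))\<^sup>2))"
proof -
  define \<Delta> where "\<Delta> = D' - D"
  define M where "M = (X - D ** A) ** transpose A"
  define c where "c = real CARD('n)"
  have cpos: "c > 0" unfolding c_def by simp
  have step: "real_of_ereal (fx g (column i X) D') - real_of_ereal (fx g (column i X) D)
     \<le> e - inner (column i X - D *v column i A) (\<Delta> *v column i A) + 1/2 * (norm (\<Delta> *v column i A))\<^sup>2" for i
    unfolding \<Delta>_def by (rule col_step[OF pg]) (use A in \<open>simp add: approx_codes_def\<close>)
  have sq: "1/2 * (norm (\<Delta> *v column i A))\<^sup>2 \<le> (N \<Delta>)\<^sup>2 * (C / 2 * (norm_l1 (column i A))\<^sup>2)" for i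
  proof -
    have "norm (\<Delta> *v column i A) \<le> norm_1to2 \<Delta> * norm_l1 (column i A)" by (rule col_bound)
    then have "(norm (\<Delta> *v column i A))\<^sup>2 \<le> (norm_1to2 \<Delta> * norm_l1 (column i A))\<^sup>2"
      by (simp add: power_mono)
    also have "\<dots> = (norm_1to2 \<Delta>)\<^sup>2 * (norm_l1 (column i A))\<^sup>2" by (simp add: power_mult_distrib)
    also have "\<dots> \<le> C * (N \<Delta>)\<^sup>2 * (norm_l1 (column i A))\<^sup>2"
      using h by (simp add: mult_right_mono)
    finally show ?thesis by (simp add: algebra_simps)
  qed
  have "FX g X D' - FX g X D = (1/c) * (\<Sum>i\<in>UNIV. real_of_ereal (fx g (column i X) D') - real_of_ereal (fx g (column i X) D))"
    unfolding FX_def c_def by (simp add: sum_subtractf right_diff_distrib)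
  also have "\<dots> \<le> (1/c) * (\<Sum>i\<in>UNIV. e - inner (column i X - D *v column i A) (\<Delta> *v column i A) + (N \<Delta>)\<^sup>2 * (C / 2 * (norm_l1 (column i A))\<^sup>2))"
  proof -
    have "real_of_ereal (fx g (column i X) D') - real_of_ereal (fx g (column i X) D)
       \<le> e - inner (column i X - D *v column i A) (\<Delta> *v column i A) + (N \<Delta>)\<^sup>2 * (C / 2 * (norm_l1 (column i A))\<^sup>2)" for i
      using step[of i] sq[of i] by linarith
    then show ?thesis using cpos by (intro mult_left_mono sum_mono) auto
  qed
  also have "\<dots> = (1/c) * (c * e - frob_inner M \<Delta> + (N \<Delta>)\<^sup>2 * (C / 2) * (\<Sum>i\<in>UNIV. (norm_l1 (column i A))\<^sup>2))"
    unfolding M_def sum_id[symmetric] c_def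
    by (simp add: sum.distrib sum_subtractf sum_distrib_left mult.assoc)
  also have "\<dots> \<le> (1/c) * (c * e + dual_norm N M * N \<Delta> + (N \<Delta>)\<^sup>2 * (C / 2) * (\<Sum>i\<in>UNIV. (norm_l1 (column i A))\<^sup>2))"
  proof -
    have "- frob_inner M \<Delta> = frob_inner M (- \<Delta>)" by (simp add: frob_inner_def sum_negf)
    also have "\<dots> \<le> dual_norm N M * N (- \<Delta>)" by (rule dual_bound[OF n C h])
    finally have "- frob_inner M \<Delta> \<le> dual_norm N M * N \<Delta>" using N_neg[OF n] by simp
    then show ?thesis using cpos by (intro mult_left_mono) auto
  qed
  also have "\<dots> = e + N \<Delta> * (1 / c * dual_norm N M)
     + (N \<Delta>)\<^sup>2 * (C / (2 * c) * (\<Sum>i\<in>UNIV. (norm_l1 (column i A))\<^sup>2))"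
    using cpos by (simp add: field_simps)
  finally show ?thesis unfolding \<Delta>_def M_def c_def .
qed

lemma approx_mono: assumes ee: "e \<le> e'" shows "approx_codes g e X D \<subseteq> approx_codes g e' X D"
proof
  fix A assume "A \<in> approx_codes g e X D"
  moreover have "fx g (column i X) D + ereal e \<le> fx g (column i X) D + ereal e'" for i
    using ee by (intro add_left_mono) simp
  ultimately show "A \<in> approx_codes g e' X D" unfolding approx_codes_def using order_trans by blast
qed

lemma approx_ne:
  assumes pg: "is_penalty g" and e: "e > 0"
  shows "\<exists>A. A \<in> approx_codes g e X D"
proof -
  have "\<forall>i. \<exists>a. lossL g (column i X) D a \<le> fx g (column i X) D + ereal e"
    using near_min[OF pg e] by blast
  then obtain \<alpha> where \<alpha>: "\<And>i. lossL g (column i X) D (\<alpha> i) \<le> fx g (column i X) D + ereal e"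
    by metis
  define A where "A = (\<chi> j i. \<alpha> i $ j)"
  have "column i A = \<alpha> i" for i by (simp add: A_def column_def vec_eq_iff)
  then have "A \<in> approx_codes g e X D" using \<alpha> by (simp add: approx_codes_def)
  then show ?thesis by blast
qed

lemma one_side:
  fixes g :: "real^'d \<Rightarrow> ereal" and N :: "real^'d^'m \<Rightarrow> real" and X :: "real^'n^'m"
  assumes pg: "is_penalty g" and n: "is_norm_on N" and C: "C > 0"
    and h: "\<forall>P. (norm_1to2 P)\<^sup>2 \<le> C * (N P)\<^sup>2"
    and L: "LX g N X D \<le> ereal LD" and CC: "CX g C X D \<le> ereal CD"
  shows "FX g X D' - FX g X D \<le> N (D' - D) * LD + (N (D' - D))\<^sup>2 * CD"
proof -
  define t where "t = N (D' - D)"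
  have t0: "0 \<le> t" unfolding t_def by (rule N_nonneg[OF n])
  have main: "FX g X D' - FX g X D \<le> t * LD + t\<^sup>2 * CD + \<eta> * (1 + t + t\<^sup>2)" if eta: "\<eta> > 0" for \<eta>
  proof -
    have "ereal LD < ereal (LD + \<eta>)" using eta by simp
    with L have "LX g N X D < ereal (LD + \<eta>)" by (rule le_less_trans)
    then obtain e1 where e1: "e1 > 0" and
      s1: "(SUP A\<in>approx_codes g e1 X D. ereal (1 / real CARD('n) * dual_norm N ((X - D ** A) ** transpose A))) < ereal (LD + \<eta>)"
      unfolding LX_def by (auto simp: INF_less_iff)
    have "ereal CD < ereal (CD + \<eta>)" using eta by simp
    with CC have "CX g C X D < ereal (CD + \<eta>)" by (rule le_less_trans)
    then obtain e2 where e2: "e2 > 0" and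
      s2: "(SUP A\<in>approx_codes g e2 X D. ereal (C / (2 * real CARD('n)) * (\<Sum>i\<in>UNIV. (norm_l1 (column i A))\<^sup>2))) < ereal (CD + \<eta>)"
      unfolding CX_def by (auto simp: INF_less_iff)
    define e where "e = min e1 (min e2 \<eta>)"
    have e0: "e > 0" using e1 e2 eta unfolding e_def by simp
    obtain A where A: "A \<in> approx_codes g e X D" using approx_ne[OF pg e0] by blast
    have A1: "A \<in> approx_codes g e1 X D" using A approx_mono[of e e1 g X D] unfolding e_def by auto
    have A2: "A \<in> approx_codes g e2 X D" 
    proof -
      have "e \<le> e2" unfolding e_def by linarith
      then show ?thesis using A approx_mono[of e e2 g X D] by blast
    qed
    have v1: "1 / real CARD('n) * dual_norm N ((X - D ** A) ** transpose A) \<le> LD + \<eta>"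
    proof -
      have "ereal (1 / real CARD('n) * dual_norm N ((X - D ** A) ** transpose A))
          \<le> (SUP A\<in>approx_codes g e1 X D. ereal (1 / real CARD('n) * dual_norm N ((X - D ** A) ** transpose A)))"
        by (rule SUP_upper[OF A1])
      from le_less_trans[OF this s1] show ?thesis by simp
    qed
    have v2: "C / (2 * real CARD('n)) * (\<Sum>i\<in>UNIV. (norm_l1 (column i A))\<^sup>2) \<le> CD + \<eta>"
    proof -
      have "ereal (C / (2 * real CARD('n)) * (\<Sum>i\<in>UNIV. (norm_l1 (column i A))\<^sup>2))
          \<le> (SUP A\<in>approx_codes g e2 X D. ereal (C / (2 * real CARD('n)) * (\<Sum>i\<in>UNIV. (norm_l1 (column i A))\<^sup>2)))"
        by (rule SUP_upper[OF A2])
      from le_less_trans[OF this s2] show ?thesis by simp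
    qed
    have "FX g X D' - FX g X D \<le> e + t * (1 / real CARD('n) * dual_norm N ((X - D ** A) ** transpose A))
       + t\<^sup>2 * (C / (2 * real CARD('n)) * (\<Sum>i\<in>UNIV. (norm_l1 (column i A))\<^sup>2))"
      unfolding t_def by (rule core[OF pg n C h A])
    also have "\<dots> \<le> \<eta> + t * (LD + \<eta>) + t\<^sup>2 * (CD + \<eta>)"
      using v1 v2 t0 unfolding e_def
      by (intro add_mono mult_left_mono) auto
    finally show ?thesis by (simp add: algebra_simps)
  qed
  have "FX g X D' - FX g X D \<le> t * LD + t\<^sup>2 * CD"
  proof (rule field_le_epsilon)
    fix d :: real assume d: "d > 0"
    have p: "1 + t + t\<^sup>2 > 0" using t0 by (simp add: add_pos_nonneg)
    have "FX g X D' - FX g X D \<le> t * LD + t\<^sup>2 * CD + d / (1 + t + t\<^sup>2) * (1 + t + t\<^sup>2)"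
      using main[of "d / (1 + t + t\<^sup>2)"] d p by simp
    then show "FX g X D' - FX g X D \<le> t * LD + t\<^sup>2 * CD + d" using p by simp
  qed
  then show ?thesis unfolding t_def .
qed


theorem mainTheorem4:
  fixes g :: "real^'d \<Rightarrow> ereal"
    and N :: "real^'d^'m \<Rightarrow> real"
    and C :: real
    and X :: "real^'n^'m"
    and \<DD> :: "(real^'d^'m) set"
    and LD CD :: real
  assumes "is_penalty g"
    and "is_norm_on N"
    and "C > 0"
    and "\<forall>P. (norm_1to2 P)\<^sup>2 \<le> C * (N P)\<^sup>2"
    and "LD > 0" and "CD \<ge> 0"
    and "\<forall>D\<in>\<DD>. LX g N X D \<le> ereal LD"
    and "\<forall>D\<in>\<DD>. CX g C X D \<le> ereal CD"
    and "D \<in> \<DD>" and "D' \<in> \<DD>" and "D \<noteq> D'"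
  shows "\<bar>FX g X D' - FX g X D\<bar> / N (D' - D) \<le> LD * (1 + CD / LD * N (D' - D))"
proof -
  define t where "t = N (D' - D)"
  have n: "is_norm_on N" by fact
  have "t \<noteq> 0" using n assms(11) unfolding t_def is_norm_on_def by auto
  then have tp: "t > 0" using N_nonneg[OF n, of "D' - D"] unfolding t_def by simp
  have a: "FX g X D' - FX g X D \<le> t * LD + t\<^sup>2 * CD"
    unfolding t_def using assms by (intro one_side) auto
  have "N (D - D') = t" unfolding t_def using N_neg[OF n, of "D' - D"] by simp
  moreover have "FX g X D - FX g X D' \<le> N (D - D') * LD + (N (D - D'))\<^sup>2 * CD"
    using assms by (intro one_side) auto
  ultimately have b: "FX g X D - FX g X D' \<le> t * LD + t\<^sup>2 * CD" by simp
  have "\<bar>FX g X D' - FX g X D\<bar> \<le> t * (LD + CD * t)"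
    using a b by (simp add: abs_le_iff power2_eq_square algebra_simps)
  then have "\<bar>FX g X D' - FX g X D\<bar> / t \<le> LD + CD * t"
    using tp by (simp add: divide_le_eq mult.commute)
  also have "\<dots> = LD * (1 + CD / LD * t)" using assms(5) by (simp add: field_simps)
  finally show ?thesis unfolding t_def .
qed

end
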